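(* Let $(X,d)$ be a metric space, $v,x\in X$, and $0<\varepsilon\le\frac13$. Suppose $P$ is a path $v=p_0,p_1,\ldots,p_l=x$ of points of $X$ such that $d(v,p_i)\le \varepsilon\, d(v,p_{i+1})$ for all $1\le i\le l-1$. Then $d_P(v,x)\le (1+3\varepsilon)\,d(v,x)$.
   Context: $d_P(v,x)$ denotes the length of the path $P$, i.e. $\sum_{i=1}^{l} d(p_{i-1},p_i)$. *)

theory Defs
  imports "HOL-Analysis.Analysis"
begin

definition path_length :: "(nat \<Rightarrow> 'a::metric_space) \<Rightarrow> nat \<Rightarrow> real" where
  "path_length p l = (\<Sum>i=1..l. dist (p (i - 1)) (p i))"

end

theory Submission
  imports Defs
begin

theorem lemma9:
  fixes p :: "nat \<Rightarrow> 'a::metric_space" and v x :: 'a and l :: nat and \<epsilon> :: real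
  assumes "0 < \<epsilon>" and "\<epsilon> \<le> 1/3"
    and "p 0 = v" and "p l = x"
    and "\<And>i. 1 \<le> i \<Longrightarrow> i \<le> l - 1 \<Longrightarrow> dist v (p i) \<le> \<epsilon> * dist v (p (i + 1))"
  shows "path_length p l \<le> (1 + 3 * \<epsilon>) * dist v x"
proof -
  have C: "k \<le> l \<Longrightarrow> path_length p k \<le> (1 + 3 * \<epsilon>) * dist v (p k)" for k
  proof (induction k)
    case 0
    then show ?case using assms(1) by (simp add: path_length_def)
  next
    case (Suc k)
    have ps: "path_length p (Suc k) = path_length p k + dist (p k) (p (Suc k))"
      by (simp add: path_length_def)
    have tri: "dist (p k) (p (Suc k)) \<le> dist v (p k) + dist v (p (Suc k))"
      by (metis dist_commute dist_triangle)
    show ?case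
    proof (cases "k = 0")
      case True
      have "dist v (p 1) \<le> (1 + 3 * \<epsilon>) * dist v (p 1)"
        using assms(1) zero_le_dist[of v "p 1"] by (simp add: algebra_simps)
      then show ?thesis using True assms(3) by (simp add: path_length_def)
    next
      case False
      then have r: "dist v (p k) \<le> \<epsilon> * dist v (p (Suc k))"
        using assms(5)[of k] Suc.prems by simp
      have IH: "path_length p k \<le> (1 + 3 * \<epsilon>) * dist v (p k)" using Suc by simp
      have d0: "0 \<le> dist v (p (Suc k))" by simp
      have A: "(2 + 3*\<epsilon>) * dist v (p k) \<le> (2 + 3*\<epsilon>) * (\<epsilon> * dist v (p (Suc k)))"
        using r assms(1) by (intro mult_left_mono) auto
      have E: "(2 + 3*\<epsilon>) * \<epsilon> \<le> 3 * \<epsilon>" proof -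
        have "\<epsilon> * (3*\<epsilon>) \<le> \<epsilon> * 1" using assms(1,2) by (intro mult_left_mono) auto
        thus ?thesis by (simp add: algebra_simps)
      qed
      have B: "((2 + 3*\<epsilon>) * \<epsilon>) * dist v (p (Suc k)) \<le> 3 * \<epsilon> * dist v (p (Suc k))"
        using mult_right_mono[OF E d0] .
      show ?thesis using ps tri IH A B by (simp add: algebra_simps)
    qed
  qed
  show ?thesis using C[of l] assms(4) by simp
qed

end
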